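(* Let $n\in\mathbb{N}$, $\mathcal{R}\subset\mathcal{H}_n$ non-empty, $\mathbb{T}$ a generator set of $\mathcal{R}$, and $A\subset[n]$ non-empty. Set $\mathcal{G}_0=\mathcal{O}_A$ and fix $|\psi_0\rangle\in\mathcal{R}$. For $q=1,2,\dots$, as long as $\mathcal{G}(\mathbb{T})\setminus\bigcup_{i=0}^{q-1}\mathcal{G}_i\neq\emptyset$, choose $P_q$ in this set and put $\mathcal{G}_q=\{P_qP : P\in\mathcal{G}_0\}$; let $m$ be the largest $q$ for which this choice was made ($m=0$ if none). Put $\mathcal{R}_i=\{P|\psi_0\rangle : P\in\mathcal{G}_i\}$ for $i=0,\dots,m$. Then $\mathcal{R}/{\sim_A}=\{\mathcal{R}_0,\dots,\mathcal{R}_m\}$. Moreover, if all elements of $\mathbb{T}$ are self-inverse and $\mathbb{T}$ is pointwise-disjoint, then every equivalence class in $\mathcal{R}/{\sim_A}$ has cardinality $|\mathcal{O}_A|$.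
   Context: $[n]=\{1,\dots,n\}$; $\mathcal{H}_n$ is the computational basis of $n$ qubits. For $|\psi\rangle=|a_1\dots a_n\rangle$ and non-empty $A=\{i_1<\dots<i_m\}$, $|\psi_A\rangle=|a_{i_1}\dots a_{i_m}\rangle$. $|\psi\rangle\sim_A|\phi\rangle$ iff $|\psi_A\rangle=|\phi_A\rangle$ (for $|\psi\rangle,|\phi\rangle\in\mathcal{R}$); $\mathcal{R}/{\sim_A}$ is its set of classes. For a set $F$ of maps $\mathcal{R}\to\mathcal{R}$, $\mathcal{G}(F)$ is its closure under composition. $\mathbb{T}$ (a set of maps $\mathcal{R}\to\mathcal{R}$) is a generator set of $\mathcal{R}$ if: (i) all elements of $\mathcal{G}(\mathbb{T})$ commute pairwise; (ii) for all $|\psi\rangle,|\phi\rangle\in\mathcal{R}$ some $P\in\mathcal{G}(\mathbb{T})$ has $P|\psi\rangle=|\phi\rangle$; (iii) for every $P\in\mathbb{T}$ and non-empty $B\subset[n]$, if $(P|\psi\rangle)_B=|\psi_B\rangle$ for some $|\psi\rangle\in\mathcal{R}$ then $(P|\phi\rangle)_B=|\phi_B\rangle$ for all $|\phi\rangle\in\mathcal{R}$. $\mathbb{T}$ is pointwise-disjoint if for all $P,T\in\mathcal{G}(\mathbb{T})$, $P|\psi\rangle=T|\psi\rangle$ for some $|\psi\rangle\in\mathcal{R}$ implies $P=T$. $\mathcal{O}_A=\{P\in\mathcal{G}(\mathbb{T}) : (P|\psi\rangle)_A=|\psi_A\rangle\ \forall|\psi\rangle\in\mathcal{R}\}$. 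*)

theory Defs
  imports Main
begin

text \<open>Computational basis states of n qubits are bit strings of length n
  (bool lists). Qubit positions are 1..n; position i is list index i - 1.\<close>

definition basis :: "nat \<Rightarrow> bool list set" where
  "basis n = {xs. length xs = n}"

definition sub :: "nat set \<Rightarrow> bool list \<Rightarrow> bool list" where
  "sub A psi = map (\<lambda>i. psi ! (i - 1)) (sorted_list_of_set A)"

definition simA :: "bool list set \<Rightarrow> nat set \<Rightarrow> (bool list \<times> bool list) set" where
  "simA R A = {(x, y). x \<in> R \<and> y \<in> R \<and> sub A x = sub A y}"

inductive_set gen :: "('a \<Rightarrow> 'a) set \<Rightarrow> ('a \<Rightarrow> 'a) set" for F where
  base: "P \<in> F \<Longrightarrow> P \<in> gen F"
| comp: "P \<in> gen F \<Longrightarrow> Q \<in> gen F \<Longrightarrow> P \<circ> Q \<in> gen F"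

text \<open>A map R \<rightarrow> R, represented canonically as a HOL function that is the identity
  outside R (so that equality of maps R \<rightarrow> R is HOL equality).\<close>
definition map_on :: "'a set \<Rightarrow> ('a \<Rightarrow> 'a) \<Rightarrow> bool" where
  "map_on R P \<longleftrightarrow> P ` R \<subseteq> R \<and> (\<forall>x. x \<notin> R \<longrightarrow> P x = x)"

definition generator_set :: "nat \<Rightarrow> bool list set \<Rightarrow> (bool list \<Rightarrow> bool list) set \<Rightarrow> bool" where
  "generator_set n R T \<longleftrightarrow>
     (\<forall>P\<in>T. map_on R P) \<and>
     (\<forall>P\<in>gen T. \<forall>Q\<in>gen T. P \<circ> Q = Q \<circ> P) \<and>
     (\<forall>psi\<in>R. \<forall>phi\<in>R. \<exists>P\<in>gen T. P psi = phi) \<and>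
     (\<forall>P\<in>T. \<forall>B. B \<noteq> {} \<and> B \<subseteq> {1..n} \<longrightarrow>
        (\<exists>psi\<in>R. sub B (P psi) = sub B psi) \<longrightarrow> (\<forall>phi\<in>R. sub B (P phi) = sub B phi))"

definition pointwise_disjoint :: "'a set \<Rightarrow> ('a \<Rightarrow> 'a) set \<Rightarrow> bool" where
  "pointwise_disjoint R T \<longleftrightarrow>
     (\<forall>P\<in>gen T. \<forall>Q\<in>gen T. (\<exists>psi\<in>R. P psi = Q psi) \<longrightarrow> P = Q)"

definition orbA :: "bool list set \<Rightarrow> (bool list \<Rightarrow> bool list) set \<Rightarrow> nat set
     \<Rightarrow> (bool list \<Rightarrow> bool list) set" where
  "orbA R T A = {P \<in> gen T. \<forall>psi\<in>R. sub A (P psi) = sub A psi}"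

end

theory Submission
  imports Defs
begin

lemma gen_map_on:
  assumes "\<forall>P\<in>T. map_on R P" "P \<in> gen T"
  shows "map_on R P"
  using assms(2)
proof (induction rule: gen.induct)
  case (base P) then show ?case using assms(1) by blast
next
  case (comp P Q) then show ?case unfolding map_on_def by (auto simp: image_subset_iff)
qed

lemma sub_eq_iff:
  assumes "finite A"
  shows "sub A x = sub A y \<longleftrightarrow> (\<forall>i\<in>A. x ! (i - 1) = y ! (i - 1))"
  using assms unfolding sub_def by (simp add: map_eq_conv)

lemma sub_single: "sub {i} x = [x ! (i - 1)]"
  unfolding sub_def by simp

lemma gs_T: "generator_set n R T \<Longrightarrow> \<forall>P\<in>T. map_on R P"
  unfolding generator_set_def by (elim conjE)

lemma gs_B: "generator_set n R T \<Longrightarrow> P \<in> T \<Longrightarrow> B \<noteq> {} \<Longrightarrow> B \<subseteq> {1..n} \<Longrightarrow>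
   psi \<in> R \<Longrightarrow> sub B (P psi) = sub B psi \<Longrightarrow> phi \<in> R \<Longrightarrow> sub B (P phi) = sub B phi"
  unfolding generator_set_def by (elim conjE) blast

lemma gen_flip:
  assumes gs: "generator_set n R T" and "P \<in> gen T" and i: "i \<in> {1..n}"
  shows "(\<forall>phi\<in>R. P phi ! (i - 1) = phi ! (i - 1)) \<or> (\<forall>phi\<in>R. P phi ! (i - 1) \<noteq> phi ! (i - 1))"
  using assms(2)
proof (induction rule: gen.induct)
  case (base P)
  have h: "\<And>psi phi. psi \<in> R \<Longrightarrow> P psi ! (i - 1) = psi ! (i - 1) \<Longrightarrow> phi \<in> R \<Longrightarrow> P phi ! (i - 1) = phi ! (i - 1)"
  proof -
    fix psi phi assume a: "psi \<in> R" "P psi ! (i - 1) = psi ! (i - 1)" "phi \<in> R"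
    have "sub {i} (P phi) = sub {i} phi"
      by (rule gs_B[OF gs base]) (use i a in \<open>auto simp: sub_single\<close>)
    then show "P phi ! (i - 1) = phi ! (i - 1)" by (simp add: sub_single)
  qed
  show ?case using h by blast
next
  case (comp P Q)
  have mQ: "map_on R Q" using gen_map_on[OF gs_T[OF gs] comp.hyps(2)] .
  hence QR: "\<And>phi. phi \<in> R \<Longrightarrow> Q phi \<in> R" unfolding map_on_def by blast
  let ?j = "i - 1"
  from comp.IH(1) show ?case
  proof
    assume p: "\<forall>phi\<in>R. P phi ! ?j = phi ! ?j"
    from comp.IH(2) show ?case
    proof
      assume q: "\<forall>phi\<in>R. Q phi ! ?j = phi ! ?j"
      show ?case using p q QR by simp
    next
      assume q: "\<forall>phi\<in>R. Q phi ! ?j \<noteq> phi ! ?j"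
      show ?case using p q QR by simp
    qed
  next
    assume p: "\<forall>phi\<in>R. P phi ! ?j \<noteq> phi ! ?j"
    from comp.IH(2) show ?case
    proof
      assume q: "\<forall>phi\<in>R. Q phi ! ?j = phi ! ?j"
      show ?case using p q QR by simp
    next
      assume q: "\<forall>phi\<in>R. Q phi ! ?j \<noteq> phi ! ?j"
      have "\<forall>phi\<in>R. (P \<circ> Q) phi ! ?j = phi ! ?j"
      proof
        fix phi assume "phi \<in> R"
        then have a: "P (Q phi) ! ?j \<noteq> Q phi ! ?j" "Q phi ! ?j \<noteq> phi ! ?j" using p q QR by auto
        then show "(P \<circ> Q) phi ! ?j = phi ! ?j" by auto
      qed
      then show ?case by blast
    qed
  qed
qed

lemma orb_lemma:
  assumes gs: "generator_set n R T" and "P \<in> gen T" and A: "A \<subseteq> {1..n}"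
    and psi: "psi \<in> R" and eq: "sub A (P psi) = sub A psi" and phi: "phi \<in> R"
  shows "sub A (P phi) = sub A phi"
proof -
  have fA: "finite A" using A finite_subset by blast
  have "\<forall>i\<in>A. P phi ! (i - 1) = phi ! (i - 1)"
  proof
    fix i assume iA: "i \<in> A"
    have "P psi ! (i - 1) = psi ! (i - 1)" using eq iA sub_eq_iff[OF fA] by blast
    then show "P phi ! (i - 1) = phi ! (i - 1)"
      using gen_flip[OF gs assms(2), of i] iA A psi phi by blast
  qed
  then show ?thesis using sub_eq_iff[OF fA] by blast
qed

theorem proposition1:
  fixes n :: nat and R :: "bool list set" and T :: "(bool list \<Rightarrow> bool list) set"
    and A :: "nat set" and psi0 :: "bool list"
    and P :: "nat \<Rightarrow> bool list \<Rightarrow> bool list" and m :: nat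
    and G :: "nat \<Rightarrow> (bool list \<Rightarrow> bool list) set"
    and Rs :: "nat \<Rightarrow> bool list set"
  assumes "R \<subseteq> basis n" and "R \<noteq> {}"
    and "generator_set n R T"
    and "A \<subseteq> {1..n}" and "A \<noteq> {}"
    and "psi0 \<in> R"
    and G0: "G 0 = orbA R T A"
    and Gq: "\<And>q. 1 \<le> q \<Longrightarrow> q \<le> m \<Longrightarrow> G q = {P q \<circ> Q | Q. Q \<in> G 0}"
    and choice: "\<And>q. 1 \<le> q \<Longrightarrow> q \<le> m \<Longrightarrow> P q \<in> gen T - (\<Union>i<q. G i)"
    and stop: "gen T - (\<Union>i\<le>m. G i) = {}"
    and Rs: "\<And>i. i \<le> m \<Longrightarrow> Rs i = (\<lambda>Q. Q psi0) ` G i"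
  shows "R // simA R A = Rs ` {0..m}
    \<and> ((\<forall>Q\<in>T. Q \<circ> Q = id) \<and> pointwise_disjoint R T
         \<longrightarrow> (\<forall>C\<in>R // simA R A. card C = card (orbA R T A)))"
proof -
  note gs = assms(3)
  have gs1: "\<forall>P\<in>T. map_on R P" using gs_T[OF gs] .
  have gs2: "\<forall>P\<in>gen T. \<forall>Q\<in>gen T. P \<circ> Q = Q \<circ> P" using gs unfolding generator_set_def by blast
  have gs3: "\<forall>psi\<in>R. \<forall>phi\<in>R. \<exists>P\<in>gen T. P psi = phi" using gs unfolding generator_set_def by blast
  have mapon: "\<And>Q. Q \<in> gen T \<Longrightarrow> map_on R Q"
    using gen_map_on[OF gs1] by blast
  have inR: "\<And>Q x. Q \<in> gen T \<Longrightarrow> x \<in> R \<Longrightarrow> Q x \<in> R"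
    using mapon unfolding map_on_def by blast
  have outR: "\<And>Q x. Q \<in> gen T \<Longrightarrow> x \<notin> R \<Longrightarrow> Q x = x"
    using mapon unfolding map_on_def by blast
  have commute: "\<And>Q S. Q \<in> gen T \<Longrightarrow> S \<in> gen T \<Longrightarrow> Q (S x) = S (Q x)" for x
    using gs2 by (metis comp_apply)
  have trans: "\<And>x y. x \<in> R \<Longrightarrow> y \<in> R \<Longrightarrow> \<exists>Q\<in>gen T. Q x = y"
    using gs3 by blast
  define cls where "cls x = {y \<in> R. sub A x = sub A y}" for x
  have img: "\<And>x. x \<in> R \<Longrightarrow> simA R A `` {x} = cls x"
    unfolding simA_def cls_def by auto
  have quot: "R // simA R A = cls ` R"
    unfolding quotient_def using img by auto
  have clsorb: "cls y = (\<lambda>Q. Q y) ` orbA R T A" if y: "y \<in> R" for y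
  proof
    show "cls y \<subseteq> (\<lambda>Q. Q y) ` orbA R T A"
    proof
      fix x assume "x \<in> cls y"
      hence x: "x \<in> R" "sub A y = sub A x" unfolding cls_def by auto
      obtain Q where Q: "Q \<in> gen T" "Q y = x" using trans[OF y x(1)] by blast
      have "Q \<in> orbA R T A" unfolding orbA_def
        using Q x orb_lemma[OF gs Q(1) assms(4) y] by auto
      then show "x \<in> (\<lambda>Q. Q y) ` orbA R T A" using Q by blast
    qed
    show "(\<lambda>Q. Q y) ` orbA R T A \<subseteq> cls y"
      unfolding cls_def orbA_def using inR y by auto
  qed
  have orbgen: "orbA R T A \<subseteq> gen T" unfolding orbA_def by auto
  have Gi: "Rs i = cls (if i = 0 then psi0 else P i psi0)" if i: "i \<le> m" for i
  proof (cases "i = 0")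
    case True
    then show ?thesis using Rs[OF i] G0 clsorb[OF assms(6)] by simp
  next
    case False
    have Pi: "P i \<in> gen T" using choice[of i] False i by auto
    have "G i = (\<lambda>Q. P i \<circ> Q) ` orbA R T A"
      using Gq[of i] False i G0 by auto
    hence "Rs i = (\<lambda>Q. P i (Q psi0)) ` orbA R T A"
      using Rs[OF i] by (simp add: image_image)
    also have "\<dots> = (\<lambda>Q. Q (P i psi0)) ` orbA R T A"
    proof (rule image_cong[OF refl])
      fix Q assume "Q \<in> orbA R T A"
      then have "Q \<in> gen T" using orbgen by blast
      then show "P i (Q psi0) = Q (P i psi0)" by (rule commute[OF Pi])
    qed
    also have "\<dots> = cls (P i psi0)" using clsorb inR Pi assms(6) by simp
    finally show ?thesis using False by simp
  qed
  have part1: "R // simA R A = Rs ` {0..m}"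
  proof
    show "Rs ` {0..m} \<subseteq> R // simA R A"
    proof
      fix C assume "C \<in> Rs ` {0..m}"
      then obtain i where i: "i \<le> m" "C = Rs i" by auto
      have "(if i = 0 then psi0 else P i psi0) \<in> R"
        using choice[of i] i inR assms(6) by auto
      then show "C \<in> R // simA R A" using Gi i quot by auto
    qed
    show "R // simA R A \<subseteq> Rs ` {0..m}"
    proof
      fix C assume "C \<in> R // simA R A"
      then obtain phi where phi: "phi \<in> R" "C = cls phi" using quot by auto
      obtain S where S: "S \<in> gen T" "S psi0 = phi" using trans[OF assms(6) phi(1)] by blast
      then obtain i where i: "i \<le> m" "S \<in> G i" using stop by auto
      show "C \<in> Rs ` {0..m}"
      proof (cases "i = 0")
        case True
        have "sub A phi = sub A psi0" using i True G0 S assms(6) unfolding orbA_def by auto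
        hence "cls phi = cls psi0" unfolding cls_def by auto
        then show ?thesis using Gi[of 0] phi by force
      next
        case False
        then obtain Q where Q: "Q \<in> orbA R T A" "S = P i \<circ> Q" using Gq[of i] i G0 by auto
        have Pi: "P i \<in> gen T" using choice[of i] False i by auto
        have Qg: "Q \<in> gen T" using Q(1) orbgen by blast
        have "phi = P i (Q psi0)" using S(2) Q(2) by simp
        also have "\<dots> = Q (P i psi0)" by (rule commute[OF Pi Qg])
        finally have "phi = Q (P i psi0)" .
        hence "sub A phi = sub A (P i psi0)"
          using Q inR Pi assms(6) unfolding orbA_def by auto
        hence "cls phi = cls (P i psi0)" unfolding cls_def by auto
        then show ?thesis using Gi[of i] phi i False by force
      qed
    qed
  qed
  have part2: "\<forall>C\<in>R // simA R A. card C = card (orbA R T A)"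
  proof
    fix C assume "C \<in> R // simA R A"
    then obtain phi where phi: "phi \<in> R" "C = cls phi" using quot by auto
    have "inj_on (\<lambda>Q. Q phi) (orbA R T A)"
    proof (rule inj_onI)
      fix Q Q' assume QQ: "Q \<in> orbA R T A" "Q' \<in> orbA R T A" "Q phi = Q' phi"
      have g: "Q \<in> gen T" "Q' \<in> gen T" using QQ orbgen by auto
      show "Q = Q'"
      proof
        fix x show "Q x = Q' x"
        proof (cases "x \<in> R")
          case True
          obtain S where S: "S \<in> gen T" "S phi = x" using trans[OF phi(1) True] by blast
          have "Q x = Q (S phi)" using S(2) by simp
          also have "\<dots> = S (Q phi)" by (rule commute[OF g(1) S(1)])
          also have "\<dots> = S (Q' phi)" using QQ(3) by simp
          also have "\<dots> = Q' (S phi)" by (rule commute[OF g(2) S(1), symmetric])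
          also have "\<dots> = Q' x" using S(2) by simp
          finally show ?thesis .
        next
          case False then show ?thesis using outR[OF g(1) False] outR[OF g(2) False] by simp
        qed
      qed
    qed
    then have "bij_betw (\<lambda>Q. Q phi) (orbA R T A) C"
      using clsorb[OF phi(1)] phi(2) unfolding bij_betw_def by auto
    then show "card C = card (orbA R T A)" by (simp add: bij_betw_same_card)
  qed
  show ?thesis using part1 part2 by blast
qed

end
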